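(* Let $\mathcal{S}$ be a finite set with $N_{\mathcal{S}} = |\mathcal{S}| \ge 2$ elements, and let $\mathcal{X}$ be an input space with a probability distribution $p$, where every $x \in \mathcal{X}$ has a unique correct output $s_x \in \mathcal{S}$ and $\mathcal{X} = \mathcal{X}^{\text{in}} \cup \mathcal{X}^{\text{out}}$ is a disjoint union. Consider an EnSolver $m$ built from $M$ base models $m_1,\dots,m_M$ with uncertainty threshold $\tau \in (0,1]$ such that $M(1-\tau)$ is a positive integer, satisfying the standing assumptions (independence and (A1)–(A3)) described in the context. Then $$\mathcal{E}(M, N_{\mathcal{S}}, \tau) > p\left( m(x) \notin \{ s_x, s_{\text{skip}} \} \,\middle|\, x \in \mathcal{X}^{\text{out}} \right).$$
   Context: Setting: $\mathcal{S}$ is a finite set of output strings with $N_{\mathcal{S}} = |\mathcal{S}| \ge 2$; inputs $x \in \mathcal{X}$ are drawn from a probability distribution $p$ on $\mathcal{X}$, each $x$ having a single correct output $s_x \in \mathcal{S}$. $\mathcal{X}$ is the disjoint union of the in-distribution set $\mathcal{X}^{\text{in}}$ and the out-of-distribution set $\mathcal{X}^{\text{out}}$, and $\alpha = p(x \in \mathcal{X}^{\text{in}})$. An ensemble consists of $M$ base models $m_1, \dots, m_M$, each of which produces a (random) prediction $m_i(x) \in \mathcal{S}$ on input $x$; probabilities are taken jointly over $x \sim p$ and the predictions, and the base models make their predictions independently of each other given the input (in particular conditionally on $x \in \mathcal{X}^{\text{in}}$ and conditionally on $x \in \mathcal{X}^{\text{out}}$). Let $\beta_i = p(m_i(x) =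 s_x \mid x \in \mathcal{X}^{\text{in}})$, $\beta_{\text{min}} = \min_i \beta_i$, $\beta_{\text{max}} = \max_i \beta_i$. Assumptions: (A1) $\beta_{\text{min}} > 1/N_{\mathcal{S}}$; (A2) for each $i$, conditionally on $x \in \mathcal{X}^{\text{in}}$, $m_i(x)$ equals each incorrect string $s \neq s_x$ with probability $(1-\beta_i)/(N_{\mathcal{S}}-1)$; (A3) for each $i$, conditionally on $x \in \mathcal{X}^{\text{out}}$, $m_i(x)$ equals each $s \in \mathcal{S}$ with probability $1/N_{\mathcal{S}}$. For $x$ and $s \in \mathcal{S}$, $n(x,s)$ is the number of base models with $m_i(x) = s$. The threshold $\tau \in (0,1]$ is such that $M(1-\tau)$ is a positive integer. The EnSolver $m$ acts as follows on input $x$: let $p_{\max} = \max_{s} n(x,s)/M$ and uncertainty $u = 1 - p_{\max}$; if $u < \tau$ it outputs a string $y$ maximizing $n(x,\cdot)$, otherwise it outputs a special skip symbol $s_{\text{skip}}$. The out-of-distribution error bound is $\mathcal{E}(M, N_{\mathcal{S}}, \tau) = \binom{M}{\lfloor M/2 \rfloor} (N_{\mathcal{S}})^{-M(1-\tau)}$. *)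

theory Defs
  imports "HOL-Probability.Probability"
begin

text \<open>Conditional probability P(A | B) = P(A \<inter> B) / P(B) (0 when P(B) = 0).\<close>
definition cprob :: "'w measure \<Rightarrow> 'w set \<Rightarrow> 'w set \<Rightarrow> real" where
  "cprob M A B = measure M (A \<inter> B) / measure M B"

text \<open>Base models are indexed 0..<M; pred i w is the prediction of model i in outcome w.
  n(x,s) = number of base models predicting s.\<close>
definition vote_count :: "nat \<Rightarrow> (nat \<Rightarrow> 'w \<Rightarrow> 's) \<Rightarrow> 'w \<Rightarrow> 's \<Rightarrow> nat" where
  "vote_count M pred w s = card {i \<in> {0..<M}. pred i w = s}"

definition p_max :: "'s set \<Rightarrow> nat \<Rightarrow> (nat \<Rightarrow> 'w \<Rightarrow> 's) \<Rightarrow> 'w \<Rightarrow> real" where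
  "p_max S M pred w = Max ((\<lambda>s. real (vote_count M pred w s) / real M) ` S)"

definition uncertainty :: "'s set \<Rightarrow> nat \<Rightarrow> (nat \<Rightarrow> 'w \<Rightarrow> 's) \<Rightarrow> 'w \<Rightarrow> real" where
  "uncertainty S M pred w = 1 - p_max S M pred w"

text \<open>The EnSolver output (None = skip symbol): if u < tau it outputs some string
  maximizing n(x, .) (any tie-breaking), otherwise it skips.\<close>
definition is_ensolver_output ::
  "'s set \<Rightarrow> nat \<Rightarrow> real \<Rightarrow> (nat \<Rightarrow> 'w \<Rightarrow> 's) \<Rightarrow> 'w \<Rightarrow> 's option \<Rightarrow> bool" where
  "is_ensolver_output S M \<tau> pred w out \<longleftrightarrow>
     (uncertainty S M pred w < \<tau> \<longrightarrow>
        (\<exists>y\<in>S. out = Some y \<and> (\<forall>s\<in>S. vote_count M pred w s \<le> vote_count M pred w y))) \<and>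
     (\<not> uncertainty S M pred w < \<tau> \<longrightarrow> out = None)"

definition err_bound :: "nat \<Rightarrow> nat \<Rightarrow> real \<Rightarrow> real" where
  "err_bound M N \<tau> = real (M choose (M div 2)) * real N powr (- (real M * (1 - \<tau>)))"

end

theory Submission
  imports Defs
begin

lemma card_UN_strict:
  assumes fin: "finite I" and finE: "\<And>i. i \<in> I \<Longrightarrow> finite (E i)"
    and ia: "ia \<in> I" and ib: "ib \<in> I" and ne: "ia \<noteq> ib"
    and x1: "x \<in> E ia" and x2: "x \<in> E ib"
  shows "card (\<Union>i\<in>I. E i) < (\<Sum>i\<in>I. card (E i))"
proof -
  have U: "(\<Union>i\<in>I. E i) = E ia \<union> (\<Union>i\<in>I-{ia}. E i)" using ia by blast
  have fA: "finite (E ia)" using finE ia by auto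
  have fB: "finite (\<Union>i\<in>I-{ia}. E i)" using fin finE by auto
  have "x \<in> E ia \<inter> (\<Union>i\<in>I-{ia}. E i)" using x1 x2 ib ne by blast
  then have "card (E ia \<inter> (\<Union>i\<in>I-{ia}. E i)) > 0" using fA by (auto simp: card_gt_0_iff)
  moreover have "card (E ia \<union> (\<Union>i\<in>I-{ia}. E i)) + card (E ia \<inter> (\<Union>i\<in>I-{ia}. E i))
     = card (E ia) + card (\<Union>i\<in>I-{ia}. E i)" using card_Un_Int[OF fA fB] by simp
  moreover have "card (\<Union>i\<in>I-{ia}. E i) \<le> (\<Sum>i\<in>I-{ia}. card (E i))"
    by (rule card_UN_le) (use fin in auto)
  moreover have "(\<Sum>i\<in>I. card (E i)) = card (E ia) + (\<Sum>i\<in>I-{ia}. card (E i))"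
    using sum.remove[OF fin ia] by simp
  ultimately show ?thesis unfolding U by linarith
qed

lemma comb_bound:
  fixes S :: "'s set" and M K :: nat
  assumes finS: "finite S" and cardS: "card S \<ge> 2" and K0: "0 < K" and KM: "K < M"
  shows "card {f \<in> {0..<M} \<rightarrow>\<^sub>E S. \<exists>s\<in>S. K+1 \<le> card {i\<in>{0..<M}. f i = s}}
         < (M choose (M div 2)) * card S ^ (M-K)"
proof -
  define N where "N = card S"
  define Ts where "Ts = {T. T \<subseteq> {0..<M} \<and> card T = K+1}"
  define E where "E = (\<lambda>(s,T). {f \<in> {0..<M} \<rightarrow>\<^sub>E S. \<forall>i\<in>T. f i = s})"
  have finTs: "finite Ts" unfolding Ts_def by (rule finite_subset[of _ "Pow {0..<M}"]) auto
  have cTs: "card Ts = M choose (K+1)" unfolding Ts_def using n_subsets[of "{0..<M}" "K+1"] by simp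
  have finF: "finite ({0..<M} \<rightarrow>\<^sub>E S)" using finS by (simp add: finite_PiE)
  have finE: "finite (E i)" for i
    unfolding E_def by (cases i) (auto intro: finite_subset[OF _ finF])
  have cE: "card (E (s,T)) = N ^ (M-K-1)" if s: "s \<in> S" and T: "T \<in> Ts" for s T
  proof -
    have "E (s,T) = PiE {0..<M} (\<lambda>i. if i \<in> T then {s} else S)"
    proof (intro set_eqI iffI)
      fix f assume "f \<in> E (s,T)"
      then show "f \<in> PiE {0..<M} (\<lambda>i. if i \<in> T then {s} else S)"
        unfolding E_def by (auto simp: PiE_iff)
    next
      fix f assume f: "f \<in> PiE {0..<M} (\<lambda>i. if i \<in> T then {s} else S)"
      have "T \<subseteq> {0..<M}" using T unfolding Ts_def by simp
      then show "f \<in> E (s,T)" using f s unfolding E_def PiE_iff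
        by (auto split: if_splits simp: subset_iff)
    qed
    then have "card (E (s,T)) = (\<Prod>i\<in>{0..<M}. card (if i \<in> T then {s} else S))"
      by (simp add: card_PiE)
    also have "\<dots> = (\<Prod>i\<in>{0..<M}. if i \<in> T then 1 else N)"
      by (rule prod.cong) (auto simp: N_def)
    also have "\<dots> = N ^ card ({0..<M} - T)"
      by (simp add: prod.If_cases Int_absorb2[symmetric] Diff_eq[symmetric])
    also have "card ({0..<M} - T) = M - (K+1)"
      using T unfolding Ts_def by (subst card_Diff_subset) (auto intro: finite_subset)
    finally show ?thesis by simp
  qed
  have sub: "{f \<in> {0..<M} \<rightarrow>\<^sub>E S. \<exists>s\<in>S. K+1 \<le> card {i\<in>{0..<M}. f i = s}} \<subseteq> (\<Union>i\<in>S \<times> Ts. E i)"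
  proof
    fix f assume "f \<in> {f \<in> {0..<M} \<rightarrow>\<^sub>E S. \<exists>s\<in>S. K+1 \<le> card {i\<in>{0..<M}. f i = s}}"
    then obtain s where f: "f \<in> {0..<M} \<rightarrow>\<^sub>E S" and s: "s \<in> S" and c: "K+1 \<le> card {i\<in>{0..<M}. f i = s}" by auto
    obtain T where T: "T \<subseteq> {i\<in>{0..<M}. f i = s}" "card T = K+1" using obtain_subset_with_card_n[OF c] by metis
    then have "T \<in> Ts" "f \<in> E (s,T)" using f unfolding Ts_def E_def by auto
    then show "f \<in> (\<Union>i\<in>S \<times> Ts. E i)" using s by blast
  qed
  have sumE: "(\<Sum>i\<in>S \<times> Ts. card (E i)) = (M choose (K+1)) * N ^ (M-K)"
  proof -
    have "(\<Sum>i\<in>S \<times> Ts. card (E i)) = (\<Sum>i\<in>S \<times> Ts. N ^ (M-K-1))"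
      by (rule sum.cong) (auto simp: cE)
    also have "\<dots> = N * (M choose (K+1)) * N ^ (M-K-1)" using cTs by (simp add: card_cartesian_product N_def)
    also have "\<dots> = (M choose (K+1)) * N ^ (M-K)"
      using KM by (cases "M-K") (auto simp: Suc_diff_Suc)
    finally show ?thesis .
  qed
  have finU: "finite (\<Union>i\<in>S \<times> Ts. E i)" using finS finTs finE by auto
  have le1: "card {f \<in> {0..<M} \<rightarrow>\<^sub>E S. \<exists>s\<in>S. K+1 \<le> card {i\<in>{0..<M}. f i = s}} \<le> card (\<Union>i\<in>S \<times> Ts. E i)"
    by (rule card_mono[OF finU sub])
  have Npos: "N > 0" using cardS N_def by simp
  have Cmax: "M choose (K+1) \<le> M choose (M div 2)" by (rule binomial_maximum)
  show ?thesis
  proof (cases "M choose (K+1) \<ge> 2")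
    case True
    then have "card Ts \<ge> 2" using cTs by simp
    then obtain T1 T2 where T12: "T1 \<in> Ts" "T2 \<in> Ts" "T1 \<noteq> T2"
    proof -
      obtain T1 where T1: "T1 \<in> Ts" using \<open>card Ts \<ge> 2\<close> by fastforce
      have "card (Ts - {T1}) \<ge> 1" using \<open>card Ts \<ge> 2\<close> T1 finTs by simp
      then obtain T2 where "T2 \<in> Ts - {T1}" by (metis card.empty ex_in_conv not_one_le_zero)
      then show ?thesis using that T1 by blast
    qed
    obtain s0 where s0: "s0 \<in> S" using cardS by fastforce
    define c where "c = restrict (\<lambda>_. s0) {0..<M}"
    have "c \<in> E (s0,T1)" "c \<in> E (s0,T2)" using T12 s0 unfolding c_def E_def Ts_def by (auto simp: subset_iff)
    then have "card (\<Union>i\<in>S \<times> Ts. E i) < (\<Sum>i\<in>S \<times> Ts. card (E i))"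
      using T12 s0 by (intro card_UN_strict[where ia="(s0,T1)" and ib="(s0,T2)" and x=c])
        (auto simp: finS finTs finE)
    then have "card (\<Union>i\<in>S \<times> Ts. E i) < (M choose (M div 2)) * N ^ (M-K)"
      using sumE Cmax mult_le_mono1[OF Cmax, of "N^(M-K)"] by linarith
    then show ?thesis using le1 unfolding N_def by linarith
  next
    case False
    have "M choose 1 \<le> M choose (M div 2)" by (rule binomial_maximum)
    then have "M choose (K+1) < M choose (M div 2)" using False K0 KM by simp
    then have "(M choose (K+1)) * N ^ (M-K) < (M choose (M div 2)) * N ^ (M-K)"
      using Npos by simp
    moreover have "card (\<Union>i\<in>S \<times> Ts. E i) \<le> (\<Sum>i\<in>S \<times> Ts. card (E i))"
      by (rule card_UN_le) (use finS finTs in auto)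
    ultimately show ?thesis using le1 sumE unfolding N_def by linarith
  qed
qed

theorem lemma1:
  fixes P :: "'w measure" and MX :: "'x measure"
    and X :: "'w \<Rightarrow> 'x" and S :: "'s set" and sx :: "'x \<Rightarrow> 's"
    and Xin Xout :: "'x set" and M :: nat and \<tau> :: real
    and pred :: "nat \<Rightarrow> 'w \<Rightarrow> 's" and ens :: "'w \<Rightarrow> 's option"
  assumes prob: "prob_space P"
    and finS: "finite S" and cardS: "card S \<ge> 2"
    and X_meas: "X \<in> measurable P MX"
    and Xin_sets: "Xin \<in> sets MX" and Xout_sets: "Xout \<in> sets MX"
    and disj: "Xin \<inter> Xout = {}" and cover: "Xin \<union> Xout = space MX"
    and sx_S: "\<And>x. sx x \<in> S"
    and sx_meas: "sx \<in> measurable MX (count_space UNIV)"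
    and pred_meas: "\<And>i. i < M \<Longrightarrow> pred i \<in> measurable P (count_space UNIV)"
    and pred_S: "\<And>i w. i < M \<Longrightarrow> w \<in> space P \<Longrightarrow> pred i w \<in> S"
    and indep_in: "\<And>f. f \<in> {0..<M} \<rightarrow> S \<Longrightarrow>
        cprob P {w \<in> space P. \<forall>i<M. pred i w = f i} {w \<in> space P. X w \<in> Xin}
        = (\<Prod>i<M. cprob P {w \<in> space P. pred i w = f i} {w \<in> space P. X w \<in> Xin})"
    and indep_out: "\<And>f. f \<in> {0..<M} \<rightarrow> S \<Longrightarrow>
        cprob P {w \<in> space P. \<forall>i<M. pred i w = f i} {w \<in> space P. X w \<in> Xout}
        = (\<Prod>i<M. cprob P {w \<in> space P. pred i w = f i} {w \<in> space P. X w \<in> Xout})"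
    and A1: "\<And>i. i < M \<Longrightarrow>
        cprob P {w \<in> space P. pred i w = sx (X w)} {w \<in> space P. X w \<in> Xin} > 1 / real (card S)"
    and A2: "\<And>i s. i < M \<Longrightarrow> s \<in> S \<Longrightarrow>
        measure P {w \<in> space P. X w \<in> Xin \<and> sx (X w) \<noteq> s} > 0 \<Longrightarrow>
        cprob P {w \<in> space P. pred i w = s} {w \<in> space P. X w \<in> Xin \<and> sx (X w) \<noteq> s}
        = (1 - cprob P {w \<in> space P. pred i w = sx (X w)} {w \<in> space P. X w \<in> Xin})
          / (real (card S) - 1)"
    and A3: "\<And>i s. i < M \<Longrightarrow> s \<in> S \<Longrightarrow>
        cprob P {w \<in> space P. pred i w = s} {w \<in> space P. X w \<in> Xout} = 1 / real (card S)"
    and tau_pos: "0 < \<tau>" and tau_le: "\<tau> \<le> 1"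
    and K_int: "\<exists>k::nat. k > 0 \<and> real M * (1 - \<tau>) = real k"
    and ens_def: "\<And>w. w \<in> space P \<Longrightarrow> is_ensolver_output S M \<tau> pred w (ens w)"
  shows "err_bound M (card S) \<tau>
         > cprob P {w \<in> space P. ens w \<notin> {Some (sx (X w)), None}} {w \<in> space P. X w \<in> Xout}"
proof -
  interpret prob_space P by (rule prob)
  define N where "N = card S"
  define B where "B = {w \<in> space P. X w \<in> Xout}"
  obtain K :: nat where K0: "K > 0" and KM: "real M * (1 - \<tau>) = real K" using K_int by blast
  have Npos: "N \<ge> 2" using cardS N_def by simp
  have KltM: "K < M"
  proof -
    have "real M * (1 - \<tau>) < real M"
    proof -
      have "real M > 0" using KM K0 tau_le by (cases "M = 0") auto
      then show ?thesis using tau_pos by (simp add: algebra_simps)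
    qed
    then show ?thesis using KM by simp
  qed
  have Mpos: "M > 0" using KltM by simp
  have eb: "err_bound M (card S) \<tau> = real (M choose (M div 2)) / real N ^ K"
    unfolding err_bound_def KM N_def[symmetric] using Npos
    by (simp add: powr_minus powr_realpow divide_inverse)
  have Cpos: "M choose (M div 2) > 0" using Mpos by simp
  have ebpos: "err_bound M (card S) \<tau> > 0" unfolding eb using Cpos Npos by simp
  have Bsets: "B \<in> sets P"
  proof -
    have "B = X -` Xout \<inter> space P" unfolding B_def by auto
    then show ?thesis using measurable_sets[OF X_meas Xout_sets] by simp
  qed
  define A where "A = (\<lambda>f. {w \<in> space P. \<forall>i<M. pred i w = f i})"
  have Asets: "A f \<in> sets P" for f
  proof -
    have "A f = (\<Inter>i\<in>{..<M}. pred i -` {f i} \<inter> space P)" unfolding A_def using Mpos by auto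
    moreover have "pred i -` {f i} \<inter> space P \<in> sets P" if "i \<in> {..<M}" for i
      using measurable_sets[OF pred_meas[of i], of "{f i}"] that by simp
    moreover have "(\<Inter>i\<in>{..<M}. pred i -` {f i} \<inter> space P) \<in> sets P"
      using Mpos calculation(2) by (intro sets.finite_INT) auto
    ultimately show ?thesis by simp
  qed
  define Bad where "Bad = {f \<in> {0..<M} \<rightarrow>\<^sub>E S. \<exists>s\<in>S. K+1 \<le> card {i\<in>{0..<M}. f i = s}}"
  have finBad: "finite Bad" unfolding Bad_def
    by (rule finite_subset[of _ "{0..<M} \<rightarrow>\<^sub>E S"]) (auto simp: finite_PiE finS)
  have cBad: "card Bad < (M choose (M div 2)) * N ^ (M-K)"
    unfolding Bad_def N_def by (rule comb_bound[OF finS cardS K0 KltM])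
  show ?thesis
  proof (cases "measure P B = 0")
    case True
    then show ?thesis using ebpos unfolding cprob_def B_def by simp
  next
    case False
    then have PB: "measure P B > 0" using measure_nonneg[of P B] by linarith
    have sub: "{w \<in> space P. ens w \<notin> {Some (sx (X w)), None}} \<inter> B \<subseteq> (\<Union>f\<in>Bad. A f \<inter> B)"
    proof
      fix w assume w: "w \<in> {w \<in> space P. ens w \<notin> {Some (sx (X w)), None}} \<inter> B"
      then have wsp: "w \<in> space P" and en: "ens w \<noteq> None" and wB: "w \<in> B" by auto
      have u: "uncertainty S M pred w < \<tau>"
        using ens_def[OF wsp] en unfolding is_ensolver_output_def by auto
      define g where "g = (\<lambda>s. real (vote_count M pred w s) / real M)"
      have Sne: "S \<noteq> {}" using cardS by auto
      have "Max (g ` S) \<in> g ` S" using finS Sne by (intro Max_in) auto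
      then obtain s where s: "s \<in> S" "g s = Max (g ` S)" by auto
      have "g s > 1 - \<tau>" using u s unfolding uncertainty_def p_max_def g_def by simp
      then have "real (vote_count M pred w s) > real M * (1 - \<tau>)"
        unfolding g_def using Mpos by (simp add: field_simps)
      then have vc: "vote_count M pred w s \<ge> K + 1" using KM by simp
      define f where "f = restrict (\<lambda>i. pred i w) {0..<M}"
      have fP: "f \<in> {0..<M} \<rightarrow>\<^sub>E S" unfolding f_def using pred_S wsp by auto
      have "{i\<in>{0..<M}. f i = s} = {i \<in> {0..<M}. pred i w = s}" unfolding f_def by auto
      then have "f \<in> Bad" using fP s(1) vc unfolding Bad_def vote_count_def by (intro CollectI conjI bexI[of _ s]) auto
      moreover have "w \<in> A f" unfolding A_def f_def using wsp by auto
      ultimately show "w \<in> (\<Union>f\<in>Bad. A f \<inter> B)" using wB by blast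
    qed
    have mA: "measure P (A f \<inter> B) = (1 / real N) ^ M * measure P B" if f: "f \<in> Bad" for f
    proof -
      have fP: "f \<in> {0..<M} \<rightarrow> S" using f unfolding Bad_def by auto
      have "cprob P (A f) B = (\<Prod>i<M. cprob P {w \<in> space P. pred i w = f i} B)"
        unfolding A_def B_def using indep_out[OF fP] .
      also have "\<dots> = (\<Prod>i<M. 1 / real N)"
        using fP A3 unfolding B_def N_def by (intro prod.cong) (auto simp: Pi_iff)
      finally have "measure P (A f \<inter> B) / measure P B = (1 / real N) ^ M"
        unfolding cprob_def by simp
      then show ?thesis using PB by (simp add: field_simps)
    qed
    have Usets: "(\<Union>f\<in>Bad. A f \<inter> B) \<in> sets P"
      using finBad Asets Bsets by (intro sets.finite_UN) auto
    have "measure P ({w \<in> space P. ens w \<notin> {Some (sx (X w)), None}} \<inter> B)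
          \<le> measure P (\<Union>f\<in>Bad. A f \<inter> B)"
      by (rule finite_measure_mono[OF sub Usets])
    also have "\<dots> \<le> (\<Sum>f\<in>Bad. measure P (A f \<inter> B))"
      using finBad Asets Bsets by (intro finite_measure_subadditive_finite) auto
    also have "\<dots> = real (card Bad) * ((1 / real N) ^ M * measure P B)"
      using mA by simp
    finally have le: "cprob P {w \<in> space P. ens w \<notin> {Some (sx (X w)), None}} B
        \<le> real (card Bad) * (1 / real N) ^ M"
      unfolding cprob_def using PB by (simp add: divide_le_eq mult.assoc)
    have "real (card Bad) < real (M choose (M div 2)) * real N ^ (M-K)"
      using cBad by (metis of_nat_less_iff of_nat_mult of_nat_power)
    then have "real (card Bad) * (1 / real N) ^ M
        < real (M choose (M div 2)) * real N ^ (M-K) * (1 / real N) ^ M"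
      using Npos by (intro mult_strict_right_mono) auto
    also have "\<dots> = real (M choose (M div 2)) / real N ^ K"
    proof -
      have "real N ^ M = real N ^ (M-K) * real N ^ K"
        using KltM by (simp add: power_add[symmetric])
      then show ?thesis using Npos by (simp add: power_one_over field_simps)
    qed
    finally show ?thesis using le unfolding eb B_def by linarith
  qed
qed

end
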